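(* Let $\pi \in S_{n+1}$ have no fixed points. Then $\pi$ has no stretching pairs if and only if there exists $\ell \in [n]$ such that $\mathrm{Exc}(\pi) = \{1,\dots,\ell\}$.
   Context: For $\pi \in S_{n+1}$, $\mathrm{Exc}(\pi) = \{i \in [n] : \pi(i) > i\}$ is the excedance set. A pair $1\le i<j\le n+1$ is a stretching pair of $\pi$ if $\pi(i) < i < j < \pi(j)$. *)

theory Defs
  imports "HOL-Combinatorics.Permutations"
begin

text \<open>Permutations of [n+1] = {1..n+1} are functions p with p permutes {1..n+1}.\<close>

definition exc :: "nat \<Rightarrow> (nat \<Rightarrow> nat) \<Rightarrow> nat set" where
  "exc n p = {i \<in> {1..n}. p i > i}"

definition stretching_pair :: "nat \<Rightarrow> (nat \<Rightarrow> nat) \<Rightarrow> nat \<Rightarrow> nat \<Rightarrow> bool" where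
  "stretching_pair n p i j \<longleftrightarrow> 1 \<le> i \<and> i < j \<and> j \<le> n + 1 \<and> p i < i \<and> j < p j"

end

theory Submission
  imports Defs
begin

theorem mainTheorem7:
  fixes n :: nat and p :: "nat \<Rightarrow> nat"
  assumes "p permutes {1..n+1}"
    and "\<forall>i\<in>{1..n+1}. p i \<noteq> i"
  shows "(\<not> (\<exists>i j. stretching_pair n p i j)) \<longleftrightarrow> (\<exists>l\<in>{1..n}. exc n p = {1..l})"
proof
  have img: "\<And>i. i \<in> {1..n+1} \<Longrightarrow> p i \<in> {1..n+1}"
    using assms(1) by (simp only: permutes_in_image)
  assume ns: "\<not> (\<exists>i j. stretching_pair n p i j)"
  have one: "1 \<in> exc n p"
  proof -
    have "n \<ge> 1"
    proof (rule ccontr)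
      assume "\<not> n \<ge> 1"
      hence "n = 0" by simp
      hence "p 1 \<in> {1..1}" using img[of 1] by simp
      thus False using assms(2) \<open>n = 0\<close> by auto
    qed
    moreover have "p 1 \<in> {1..n+1}" using img[of 1] by simp
    moreover have "p 1 \<noteq> 1" using assms(2) by simp
    ultimately show ?thesis unfolding exc_def by auto
  qed
  have fin: "finite (exc n p)" unfolding exc_def by simp
  define l where "l = Max (exc n p)"
  have lin: "l \<in> exc n p" using fin one l_def Max_in by blast
  have down: "i \<in> exc n p" if "j \<in> exc n p" "1 \<le> i" "i < j" for i j
  proof (rule ccontr)
    assume "i \<notin> exc n p"
    have jn: "j \<le> n" "j < p j" using that(1) unfolding exc_def by auto
    hence "i \<le> n" using that by simp
    hence "\<not> p i > i" using \<open>i \<notin> exc n p\<close> that(2) unfolding exc_def by auto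
    moreover have "p i \<noteq> i" using assms(2) that(2) \<open>i \<le> n\<close> by simp
    ultimately have "p i < i" by simp
    hence "stretching_pair n p i j" unfolding stretching_pair_def using that jn by simp
    thus False using ns by blast
  qed
  have "exc n p = {1..l}"
  proof
    show "exc n p \<subseteq> {1..l}" using fin l_def unfolding exc_def by auto
    show "{1..l} \<subseteq> exc n p"
    proof
      fix i assume "i \<in> {1..l}"
      thus "i \<in> exc n p" using down[OF lin] lin by (cases "i = l") auto
    qed
  qed
  moreover have "l \<in> {1..n}" using lin unfolding exc_def by auto
  ultimately show "\<exists>l\<in>{1..n}. exc n p = {1..l}" by blast
next
  assume "\<exists>l\<in>{1..n}. exc n p = {1..l}"
  then obtain l where l: "exc n p = {1..l}" by blast
  show "\<not> (\<exists>i j. stretching_pair n p i j)"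
  proof
    assume "\<exists>i j. stretching_pair n p i j"
    then obtain i j where s: "1 \<le> i" "i < j" "j \<le> n + 1" "p i < i" "j < p j"
      unfolding stretching_pair_def by blast
    have "j \<le> n"
    proof (rule ccontr)
      assume "\<not> j \<le> n"
      hence "j = n+1" using s by simp
      hence "p j \<in> {1..n+1}" using assms(1) s(1,2) by (simp only: permutes_in_image) simp
      thus False using s \<open>j = n+1\<close> by simp
    qed
    hence "j \<in> exc n p" using s unfolding exc_def by simp
    hence "i \<in> exc n p" using l s by auto
    thus False using s unfolding exc_def by simp
  qed
qed

end
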